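(* Every absorbing hierarchical generator $\mathcal{H}$ is linearly independent (as a set of functions on $\mathbb{R}^d$).
   Context: Fix integers $d\ge1$, $n\ge2$, $m\ge2$; $s=n-1$, $p=m-1$. B-splines $\varphi^\ell_{\vec i}(\vec x)=\prod_kQ(n^\ell x_k-i_k)$ on $\mathbb{R}^d$ for $\ell\ge0$, $\vec i\in\mathbb{Z}^d$, $Q$ the uniform B-spline of order $m$ with knots $0,\dots,m$; $\mathfrak{B}$ the set of all of them; $\mathcal{B}^0=\{\varphi^0_{\vec i}:\vec i\in[-p:0]^d\}$. Children $\mathrm{ch}(\varphi^\ell_{\vec i})=\{\varphi^{\ell+1}_{\vec k}:n\vec i\le\vec k\le n\vec i+sm\}$, extended to sets by union. Cells $I^\ell_{\vec i}=\prod_k[i_kn^{-\ell},(i_k+1)n^{-\ell})$; cell support $\mathbb{I}(\varphi^\ell_{\vec i})=\{I^\ell_{\vec k}:\vec i\le\vec k\le\vec i+p\}$ (componentwise), extended to sets by union. A lineage is a finite $\mathcal{L}\subset\mathfrak{B}$ with $\mathcal{L}\subset\mathcal{B}^0\cup\mathrm{ch}(\mathcal{L})$; its hierarchical generator is $\mathcal{H}=(\mathcal{B}^0\cup\mathrm{ch}(\mathcal{L}))\setminus\mathcal{L}$. $\mathcal{H}$ is absorbing if there is no $\varphi\in\mathcal{H}$ with $\mathbb{I}(\varphi)\subset\mathbb{I}(\mathcal{L})$. *)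

theory Defs
  imports "HOL-Analysis.Analysis"
begin

text \<open>Uniform (cardinal) B-spline of order m with knots 0,...,m, via the
Cox--de Boor recursion: order 1 is the indicator of [0,1).\<close>
fun cardB :: "nat \<Rightarrow> real \<Rightarrow> real" where
  "cardB 0 x = 0"
| "cardB (Suc 0) x = (if 0 \<le> x \<and> x < 1 then 1 else 0)"
| "cardB (Suc (Suc k)) x =
     (x * cardB (Suc k) x + (real (k + 2) - x) * cardB (Suc k) (x - 1)) / real (k + 1)"

definition bspl :: "nat \<Rightarrow> nat \<Rightarrow> nat \<Rightarrow> int ^ 'd \<Rightarrow> (real ^ 'd \<Rightarrow> real)" where
  "bspl n m l i = (\<lambda>x. \<Prod>k\<in>UNIV. cardB m (real n ^ l * x $ k - of_int (i $ k)))"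

definition vle :: "int ^ 'd \<Rightarrow> int ^ 'd \<Rightarrow> bool" where
  "vle a b \<longleftrightarrow> (\<forall>k. a $ k \<le> b $ k)"

definition allB :: "nat \<Rightarrow> nat \<Rightarrow> (real ^ 'd \<Rightarrow> real) set" where
  "allB n m = {bspl n m l i | l i. True}"

definition B0 :: "nat \<Rightarrow> nat \<Rightarrow> (real ^ 'd \<Rightarrow> real) set" where
  "B0 n m = {bspl n m 0 i | i. vle (\<chi> k. - int (m - 1)) i \<and> vle i (\<chi> k. 0)}"

definition ch :: "nat \<Rightarrow> nat \<Rightarrow> (real ^ 'd \<Rightarrow> real) \<Rightarrow> (real ^ 'd \<Rightarrow> real) set" where
  "ch n m phi = {bspl n m (Suc l) k | l i k. phi = bspl n m l i \<and>
      vle (\<chi> j. int n * i $ j) k \<and> vle k (\<chi> j. int n * i $ j + int ((n - 1) * m))}"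

definition chS :: "nat \<Rightarrow> nat \<Rightarrow> (real ^ 'd \<Rightarrow> real) set \<Rightarrow> (real ^ 'd \<Rightarrow> real) set" where
  "chS n m S = (\<Union>phi\<in>S. ch n m phi)"

definition cell :: "nat \<Rightarrow> nat \<Rightarrow> int ^ 'd \<Rightarrow> (real ^ 'd) set" where
  "cell n l i = {x. \<forall>k. of_int (i $ k) / real n ^ l \<le> x $ k \<and> x $ k < (of_int (i $ k) + 1) / real n ^ l}"

definition cellsupp :: "nat \<Rightarrow> nat \<Rightarrow> (real ^ 'd \<Rightarrow> real) \<Rightarrow> (real ^ 'd) set set" where
  "cellsupp n m phi = {cell n l k | l i k. phi = bspl n m l i \<and>
      vle i k \<and> vle k (\<chi> j. i $ j + int (m - 1))}"

definition cellsuppS :: "nat \<Rightarrow> nat \<Rightarrow> (real ^ 'd \<Rightarrow> real) set \<Rightarrow> (real ^ 'd) set set" where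
  "cellsuppS n m S = (\<Union>phi\<in>S. cellsupp n m phi)"

definition lineage :: "nat \<Rightarrow> nat \<Rightarrow> (real ^ 'd \<Rightarrow> real) set \<Rightarrow> bool" where
  "lineage n m L \<longleftrightarrow> finite L \<and> L \<subseteq> allB n m \<and> L \<subseteq> B0 n m \<union> chS n m L"

definition hgen :: "nat \<Rightarrow> nat \<Rightarrow> (real ^ 'd \<Rightarrow> real) set \<Rightarrow> (real ^ 'd \<Rightarrow> real) set" where
  "hgen n m L = (B0 n m \<union> chS n m L) - L"

definition absorbing :: "nat \<Rightarrow> nat \<Rightarrow> (real ^ 'd \<Rightarrow> real) set \<Rightarrow> bool" where
  "absorbing n m L \<longleftrightarrow> \<not> (\<exists>phi\<in>hgen n m L. cellsupp n m phi \<subseteq> cellsuppS n m L)"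

definition lin_indep_fun :: "('a \<Rightarrow> real) set \<Rightarrow> bool" where
  "lin_indep_fun H \<longleftrightarrow> (\<forall>S c. finite S \<and> S \<subseteq> H \<and> (\<forall>x. (\<Sum>f\<in>S. c f * f x) = 0)
      \<longrightarrow> (\<forall>f\<in>S. c f = 0))"

end

theory Submission
  imports Defs "HOL-Computational_Algebra.Polynomial"
begin

fun Pp :: "nat \<Rightarrow> int \<Rightarrow> real poly" where
  "Pp 0 s = 0"
| "Pp (Suc 0) s = (if s = 0 then 1 else 0)"
| "Pp (Suc (Suc k)) s = smult (1 / real (k+1))
     (([:0,1:] + [:of_int s:]) * Pp (Suc k) s + ([:real (k+2) - of_int s:] - [:0,1:]) * Pp (Suc k) (s - 1))"

lemma Pp_zero: "s < 0 \<or> s \<ge> int m \<Longrightarrow> Pp m s = 0"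
  by (induction m s rule: Pp.induct) auto

lemma cardB_Pp: "0 \<le> y \<Longrightarrow> y < 1 \<Longrightarrow> cardB m (y + of_int s) = poly (Pp m s) y"
proof (induction m s rule: Pp.induct)
  case (3 k s)
  have e: "y + of_int s - 1 = y + of_int (s - 1)" by simp
  show ?case using 3
    by (simp only: cardB.simps Pp.simps e) (simp add: field_simps)
qed auto

lemma pderiv_sum': "pderiv (sum f A) = (\<Sum>x\<in>A. pderiv (f x))"
  by (induction A rule: infinite_finite_induct) (auto simp: pderiv_add)

lemma pderiv_Pp: "pderiv (Pp (Suc (Suc k)) s) = Pp (Suc k) s - Pp (Suc k) (s - 1)"
proof (induction k arbitrary: s)
  case 0
  then show ?case by (simp add: pderiv_minus pderiv_pCons pderiv_add pderiv_diff pderiv_mult pderiv_smult)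
next
  case (Suc k)
  show ?case
    apply (subst Pp.simps(3))
    apply (simp only: pderiv_add pderiv_diff pderiv_mult pderiv_smult Suc)
    apply (simp add: pderiv_pCons)
    apply (simp add: poly_eq_poly_eq_iff[symmetric] fun_eq_iff)
    apply (intro allI)
    subgoal for x
      apply (rule sym)
      apply (simp add: divide_simps)
      apply (simp add: algebra_simps)
      done
    done
qed

lemma poly_Pp_step: "poly (Pp (Suc (Suc k)) s) y = ((y + of_int s) * poly (Pp (Suc k) s) y + (real (k+2) - of_int s - y) * poly (Pp (Suc k) (s - 1)) y) / real (k+1)"
  by (simp add: field_simps)

lemma Pp_sum1: "(\<Sum>r<Suc k. Pp (Suc k) (int r)) = 1"
proof (induction k)
  case 0
  then show ?case by simp
next
  case (Suc k)
  let ?A = "\<lambda>r y. poly (Pp (Suc k) r) y"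
  have "poly (\<Sum>r<Suc (Suc k). Pp (Suc (Suc k)) (int r)) y = 1" for y
  proof -
    have h1: "(\<Sum>r<Suc (Suc k). (y + of_int (int r)) * ?A (int r) y) = (\<Sum>r<Suc k. (y + of_int (int r)) * ?A (int r) y)"
      by (simp add: Pp_zero)
    have h2: "(\<Sum>r<Suc (Suc k). (real (k+2) - of_int (int r) - y) * ?A (int r - 1) y) = (\<Sum>r<Suc k. (real (k+1) - of_int (int r) - y) * ?A (int r) y)"
      by (subst sum.lessThan_Suc_shift) (simp add: Pp_zero algebra_simps)
    have h3: "(\<Sum>r<Suc k. ?A (int r) y) = 1"
      using arg_cong[OF Suc, of "\<lambda>p. poly p y"] by (simp add: poly_sum)
    have "poly (\<Sum>r<Suc (Suc k). Pp (Suc (Suc k)) (int r)) y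
        = ((\<Sum>r<Suc (Suc k). (y + of_int (int r)) * ?A (int r) y)
          + (\<Sum>r<Suc (Suc k). (real (k+2) - of_int (int r) - y) * ?A (int r - 1) y)) / real (k+1)"
      by (simp only: poly_sum poly_Pp_step sum_divide_distrib[symmetric] sum.distrib[symmetric] add_divide_distrib[symmetric])
    also have "\<dots> = (\<Sum>r<Suc k. real (k+1) * ?A (int r) y) / real (k+1)"
      unfolding h1 h2 sum.distrib[symmetric] by (simp add: algebra_simps)
    also have "\<dots> = 1" using h3 by (simp add: sum_distrib_left[symmetric])
    finally show ?thesis .
  qed
  then show ?case by (simp add: poly_eq_poly_eq_iff[symmetric] fun_eq_iff)
qed

lemma smult_sum_right: "smult c (\<Sum>i\<in>S. f i) = (\<Sum>i\<in>S. smult c (f i))"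
  by (induction S rule: infinite_finite_induct) (auto simp: smult_add_right)

lemma Pp_indep: "(\<Sum>r<Suc k. smult (c r) (Pp (Suc k) (int r))) = 0 \<Longrightarrow> r < Suc k \<Longrightarrow> c r = 0"
proof (induction k arbitrary: c r)
  case 0
  then show ?case by simp
next
  case (Suc k)
  have "pderiv (\<Sum>r<Suc (Suc k). smult (c r) (Pp (Suc (Suc k)) (int r))) = 0"
    using Suc.prems(1) by (simp del: Pp.simps)
  moreover have "pderiv (\<Sum>r<Suc (Suc k). smult (c r) (Pp (Suc (Suc k)) (int r))) = (\<Sum>r<Suc (Suc k). smult (c r) (Pp (Suc k) (int r))) - (\<Sum>r<Suc (Suc k). smult (c r) (Pp (Suc k) (int r - 1)))"
    by (simp only: pderiv_sum' pderiv_smult pderiv_Pp smult_diff_right sum_subtractf)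
  ultimately have d0: "(\<Sum>r<Suc (Suc k). smult (c r) (Pp (Suc k) (int r))) - (\<Sum>r<Suc (Suc k). smult (c r) (Pp (Suc k) (int r - 1))) = 0"
    by simp
  hence "(\<Sum>r<Suc k. smult (c r) (Pp (Suc k) (int r))) - (\<Sum>r<Suc k. smult (c (Suc r)) (Pp (Suc k) (int r))) = 0"
  proof -
    have s1: "(\<Sum>r<Suc (Suc k). smult (c r) (Pp (Suc k) (int r))) = (\<Sum>r<Suc k. smult (c r) (Pp (Suc k) (int r)))"
      by (simp del: Pp.simps add: Pp_zero)
    have s2: "(\<Sum>r<Suc (Suc k). smult (c r) (Pp (Suc k) (int r - 1))) = (\<Sum>r<Suc k. smult (c (Suc r)) (Pp (Suc k) (int r)))"
      by (subst sum.lessThan_Suc_shift) (simp del: Pp.simps add: Pp_zero)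
    show ?thesis using d0 unfolding s1 s2 .
  qed
  hence "(\<Sum>r<Suc k. smult (c r - c (Suc r)) (Pp (Suc k) (int r))) = 0"
    by (simp del: Pp.simps add: smult_diff_left sum_subtractf)
  hence eq: "r < Suc k \<Longrightarrow> c r = c (Suc r)" for r
    using Suc.IH[of "\<lambda>r. c r - c (Suc r)" r] by (simp only:) simp
  have all: "r < Suc (Suc k) \<Longrightarrow> c r = c 0" for r
  proof (induction r)
    case (Suc r)
    then have "c r = c 0" by simp
    moreover have "c r = c (Suc r)" using eq Suc.prems by simp
    ultimately show ?case by simp
  qed simp
  have "(\<Sum>r<Suc (Suc k). smult (c r) (Pp (Suc (Suc k)) (int r))) = smult (c 0) (\<Sum>r<Suc (Suc k). Pp (Suc (Suc k)) (int r))"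
    unfolding smult_sum_right by (rule sum.cong[OF refl]) (metis all lessThan_iff)
  also have "\<dots> = smult (c 0) 1" by (simp only: Pp_sum1)
  finally have "c 0 = 0" using Suc.prems(1) by (simp del: Pp.simps)
  then show ?case using all[OF Suc.prems(2)] by simp
qed

lemma Pp_indep_fun:
  assumes R: "finite R" and z: "\<And>y. 0 < y \<Longrightarrow> y < 1 \<Longrightarrow> (\<Sum>r\<in>R. c r * poly (Pp m r) y) = 0"
    and r: "r \<in> R" "0 \<le> r" "r < int m"
  shows "c r = 0"
proof -
  define Q where "Q = (\<Sum>r\<in>R. smult (c r) (Pp m r))"
  have pQ: "poly Q y = 0" if "0 < y" "y < 1" for y
    using z[OF that] by (simp add: Q_def poly_sum del: Pp.simps)
  have "Q = 0"
  proof (rule ccontr)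
    assume "Q \<noteq> 0"
    hence "finite {y. poly Q y = 0}" by (rule poly_roots_finite)
    moreover have "{0<..<(1::real)} \<subseteq> {y. poly Q y = 0}" using pQ by auto
    ultimately have "finite {0<..<(1::real)}" using finite_subset by blast
    thus False using infinite_Ioo[of "0::real" 1] by simp
  qed
  obtain k where mk: "m = Suc k" using r by (cases m) auto
  define c' where "c' r' = (if int r' \<in> R then c (int r') else 0)" for r'
  have "(\<Sum>r'<Suc k. smult (c' r') (Pp (Suc k) (int r'))) = (\<Sum>r'\<in>{r'. r' < Suc k \<and> int r' \<in> R}. smult (c (int r')) (Pp (Suc k) (int r')))"
    by (rule sum.mono_neutral_cong_right) (auto simp: c'_def simp del: Pp.simps)
  also have "\<dots> = (\<Sum>r\<in>int ` {r'. r' < Suc k \<and> int r' \<in> R}. smult (c r) (Pp (Suc k) r))"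
    by (subst sum.reindex) (auto simp del: Pp.simps)
  also have "int ` {r'. r' < Suc k \<and> int r' \<in> R} = R \<inter> {0..<int (Suc k)}"
  proof (intro equalityI subsetI)
    fix x assume "x \<in> R \<inter> {0..<int (Suc k)}"
    thus "x \<in> int ` {r'. r' < Suc k \<and> int r' \<in> R}"
      by (intro image_eqI[where x="nat x"]) auto
  qed auto
  also have "(\<Sum>r\<in>R \<inter> {0..<int (Suc k)}. smult (c r) (Pp (Suc k) r)) = Q"
    unfolding Q_def mk
  proof (rule sum.mono_neutral_left)
    show "\<forall>i\<in>R - R \<inter> {0..<int (Suc k)}. smult (c i) (Pp (Suc k) i) = 0"
    proof
      fix i assume "i \<in> R - R \<inter> {0..<int (Suc k)}"
      hence "i < 0 \<or> i \<ge> int (Suc k)" by auto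
      thus "smult (c i) (Pp (Suc k) i) = 0" using Pp_zero by simp
    qed
  qed (use R in auto)
  finally have "(\<Sum>r'<Suc k. smult (c' r') (Pp (Suc k) (int r'))) = 0" using \<open>Q = 0\<close> by simp
  hence "c' (nat r) = 0" using Pp_indep[where k=k and c=c' and r="nat r"] r mk by simp
  thus ?thesis using r by (simp add: c'_def)
qed

lemma tensor_indep:
  fixes \<sigma> :: "'a \<Rightarrow> int ^ 'd" and e :: "'a \<Rightarrow> real" and J :: "'d set"
  assumes "finite J"
  shows "finite G \<Longrightarrow> (\<forall>g\<in>G. \<forall>g'\<in>G. (\<forall>j\<in>J. \<sigma> g $ j = \<sigma> g' $ j) \<longrightarrow> g = g') \<Longrightarrow>
    (\<forall>t::real^'d. (\<forall>j. 0 < t$j \<and> t$j < 1) \<longrightarrow> (\<Sum>g\<in>G. e g * (\<Prod>j\<in>J. poly (Pp m (\<sigma> g $ j)) (t$j))) = 0) \<Longrightarrow>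
    g0 \<in> G \<Longrightarrow> (\<forall>j\<in>J. 0 \<le> \<sigma> g0 $ j \<and> \<sigma> g0 $ j < int m) \<Longrightarrow> e g0 = 0"
  using assms
proof (induction J arbitrary: G e g0 rule: finite_induct)
  case empty
  have G: "G = {g0}" using empty.prems(2,4) by auto
  have "\<forall>j. 0 < ((\<chi> j. 1/2)::real^'d) $ j \<and> ((\<chi> j. 1/2)::real^'d) $ j < 1" by simp
  then show ?case using empty.prems(3) G by fastforce
next
  case (insert j0 J)
  define r0 where "r0 = \<sigma> g0 $ j0"
  define G' where "G' = {g\<in>G. \<sigma> g $ j0 = r0}"
  have "(\<Sum>g\<in>G'. e g * (\<Prod>j\<in>J. poly (Pp m (\<sigma> g $ j)) (t$j))) = 0" if t: "\<forall>j. 0 < t$j \<and> t$j < 1" for t :: "real^'d"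
  proof -
    define c where "c r = (\<Sum>g\<in>{g\<in>G. \<sigma> g $ j0 = r}. e g * (\<Prod>j\<in>J. poly (Pp m (\<sigma> g $ j)) (t$j)))" for r
    have "(\<Sum>r\<in>(\<lambda>g. \<sigma> g $ j0) ` G. c r * poly (Pp m r) y) = 0" if y: "0 < y" "y < 1" for y
    proof -
      define t' where "t' = (\<chi> j. if j = j0 then y else t$j)"
      have t': "\<forall>j. 0 < t'$j \<and> t'$j < 1" using t y by (simp add: t'_def)
      have t'j0: "t'$j0 = y" by (simp add: t'_def)
      have pr: "(\<Prod>j\<in>J. poly (Pp m (\<sigma> g $ j)) (t'$j)) = (\<Prod>j\<in>J. poly (Pp m (\<sigma> g $ j)) (t$j))" for g
        using insert.hyps(2) by (intro prod.cong) (auto simp: t'_def)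
      have "0 = (\<Sum>g\<in>G. e g * (\<Prod>j\<in>insert j0 J. poly (Pp m (\<sigma> g $ j)) (t'$j)))"
        using insert.prems(3) t' by simp
      also have "\<dots> = (\<Sum>g\<in>G. poly (Pp m (\<sigma> g $ j0)) y * (e g * (\<Prod>j\<in>J. poly (Pp m (\<sigma> g $ j)) (t$j))))"
        using insert.hyps by (intro sum.cong) (simp_all add: pr t'j0 del: Pp.simps)
      also have "\<dots> = (\<Sum>r\<in>(\<lambda>g. \<sigma> g $ j0) ` G. \<Sum>g\<in>{g\<in>G. \<sigma> g $ j0 = r}. poly (Pp m (\<sigma> g $ j0)) y * (e g * (\<Prod>j\<in>J. poly (Pp m (\<sigma> g $ j)) (t$j))))"
        by (rule sum.image_gen) (rule insert.prems(1))
      also have "\<dots> = (\<Sum>r\<in>(\<lambda>g. \<sigma> g $ j0) ` G. c r * poly (Pp m r) y)"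
        unfolding c_def sum_distrib_right
        by (intro sum.cong refl) (simp add: algebra_simps del: Pp.simps)
      finally show ?thesis by simp
    qed
    note z = this
    have "c r0 = 0"
      apply (rule Pp_indep_fun[where R="(\<lambda>g. \<sigma> g $ j0) ` G" and c=c and m=m and r=r0])
      using z insert.prems r0_def by auto
    thus ?thesis by (simp add: c_def G'_def)
  qed
  moreover have "finite G'" using insert.prems(1) by (simp add: G'_def)
  moreover have "\<forall>g\<in>G'. \<forall>g'\<in>G'. (\<forall>j\<in>J. \<sigma> g $ j = \<sigma> g' $ j) \<longrightarrow> g = g'"
    using insert.prems(2) by (auto simp: G'_def)
  moreover have "g0 \<in> G'" using insert.prems(4) by (simp add: G'_def r0_def)
  ultimately show ?case using insert.IH[of G' e g0] insert.prems(5) by auto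
qed

lemma cardB_zero: "x < 0 \<or> x \<ge> real m \<Longrightarrow> cardB m x = 0"
  by (induction m x rule: cardB.induct) auto

lemma cardB_zero0: "m \<ge> 2 \<Longrightarrow> cardB m 0 = 0"
proof -
  assume "m \<ge> 2"
  then obtain k where "m = Suc (Suc k)" by (metis add_2_eq_Suc le_Suc_ex)
  thus ?thesis by (simp add: cardB_zero)
qed

lemma cardB_nonneg: "cardB m x \<ge> 0"
proof (induction m x rule: cardB.induct)
  case (3 k x)
  show ?case
  proof (cases "x < 0 \<or> x \<ge> real (Suc (Suc k))")
    case True
    have "cardB (Suc (Suc k)) x = 0" using True by (rule cardB_zero)
    thus ?thesis by linarith
  next
    case False thus ?thesis using 3 by (simp add: divide_simps)
  qed
qed auto

lemma cardB_pos: "m \<ge> 1 \<Longrightarrow> 0 < x \<Longrightarrow> x < real m \<Longrightarrow> cardB m x > 0"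
proof (induction m x rule: cardB.induct)
  case (3 k x)
  have a: "x * cardB (Suc k) x \<ge> 0" using 3 cardB_nonneg by simp
  have b: "(real (k + 2) - x) * cardB (Suc k) (x - 1) \<ge> 0" using 3 cardB_nonneg by simp
  show ?case
  proof (cases "x < real (Suc k)")
    case True
    hence "x * cardB (Suc k) x > 0" using 3 by simp
    thus ?thesis using b by (simp add: divide_simps)
  next
    case False
    have "cardB (Suc k) (x - 1) > 0"
    proof (cases "x - 1 > 0")
      case True thus ?thesis using 3 False by simp
    next
      case F2: False
      hence "x = 1" "k = 0" using False by auto
      thus ?thesis by simp
    qed
    hence "(real (k + 2) - x) * cardB (Suc k) (x - 1) > 0" using 3 by simp
    thus ?thesis using a by (simp add: divide_simps)
  qed
qed auto

lemma cardB_nz: "m \<ge> 2 \<Longrightarrow> cardB m x \<noteq> 0 \<longleftrightarrow> 0 < x \<and> x < real m"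
proof
  assume m: "m \<ge> 2"
  show "cardB m x \<noteq> 0 \<Longrightarrow> 0 < x \<and> x < real m"
  proof (rule ccontr)
    assume nz: "cardB m x \<noteq> 0" and "\<not> (0 < x \<and> x < real m)"
    then consider "x < 0 \<or> x \<ge> real m" | "x = 0" by linarith
    thus False using nz cardB_zero[of x m] cardB_zero0[OF m] by cases auto
  qed
  show "0 < x \<and> x < real m \<Longrightarrow> cardB m x \<noteq> 0" using cardB_pos[of m x] m by simp
qed

lemma bspl_nz: "m \<ge> 2 \<Longrightarrow> bspl n m l i x \<noteq> 0 \<longleftrightarrow>
   (\<forall>j. 0 < real n ^ l * x $ j - of_int (i $ j) \<and> real n ^ l * x $ j - of_int (i $ j) < real m)"
  by (simp add: bspl_def cardB_nz)

lemma interval_eq: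
  fixes a b a' b' :: real
  assumes "a < b" "a' < b'" "\<And>y. (a < y \<and> y < b) \<longleftrightarrow> (a' < y \<and> y < b')"
  shows "a = a' \<and> b = b'"
proof -
  have 1: "a = a'"
  proof (rule ccontr)
    assume "a \<noteq> a'"
    then consider "a < a'" | "a' < a" by linarith
    thus False
    proof cases
      case 1 thus False using assms(3)[of "(a + min a' b)/2"] assms(1,2) by auto
    next
      case 2 thus False using assms(3)[of "(a' + min a b')/2"] assms(1,2) by auto
    qed
  qed
  have "b = b'"
  proof (rule ccontr)
    assume "b \<noteq> b'"
    then consider "b < b'" | "b' < b" by linarith
    thus False
    proof cases
      case 1 thus False using assms(3)[of "(b + max a' b)/2"] assms(1,2) 1 \<open>a = a'\<close> by auto
    next
      case 2 thus False using assms(3)[of "(b' + max a b')/2"] assms(1,2) \<open>a = a'\<close> by auto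
    qed
  qed
  with 1 show ?thesis by simp
qed

lemma bspl_inj:
  assumes n: "n \<ge> 2" and m: "m \<ge> 2" and eq: "bspl n m l i = bspl n m l' i'"
  shows "l = l' \<and> i = i'"
proof -
  define N where "N = real n ^ l"
  define N' where "N' = real n ^ l'"
  have Np: "N > 0" "N' > 0" using n by (auto simp: N_def N'_def)
  define z where "z = (\<chi> j. (of_int (i $ j) + 1) / N)"
  have "bspl n m l i z \<noteq> 0" using m Np by (simp add: bspl_nz z_def N_def[symmetric])
  hence z': "\<forall>j. 0 < N' * z $ j - of_int (i' $ j) \<and> N' * z $ j - of_int (i' $ j) < real m"
    using m by (simp add: eq bspl_nz N'_def)
  have key: "of_int (i $ j) / N = of_int (i' $ j) / N' \<and> (of_int (i $ j) + real m) / N = (of_int (i' $ j) + real m) / N'" for j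
  proof (rule interval_eq)
    show "of_int (i $ j) / N < (of_int (i $ j) + real m) / N" using Np m by (simp add: divide_strict_right_mono)
    show "of_int (i' $ j) / N' < (of_int (i' $ j) + real m) / N'" using Np m by (simp add: divide_strict_right_mono)
    fix y
    define x where "x = (\<chi> k. if k = j then y else z $ k)"
    have "bspl n m l i x \<noteq> 0 \<longleftrightarrow> bspl n m l' i' x \<noteq> 0" by (simp add: eq)
    moreover have "bspl n m l i x \<noteq> 0 \<longleftrightarrow> (of_int (i $ j) / N < y \<and> y < (of_int (i $ j) + real m) / N)"
      unfolding bspl_nz[OF m] N_def[symmetric]
      using Np m by (auto simp: x_def z_def field_simps)
    moreover have "bspl n m l' i' x \<noteq> 0 \<longleftrightarrow> (of_int (i' $ j) / N' < y \<and> y < (of_int (i' $ j) + real m) / N')"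
      unfolding bspl_nz[OF m] N'_def[symmetric]
      using Np m z' by (auto simp: x_def field_simps)
    ultimately show "(of_int (i $ j) / N < y \<and> y < (of_int (i $ j) + real m) / N) \<longleftrightarrow> (of_int (i' $ j) / N' < y \<and> y < (of_int (i' $ j) + real m) / N')"
      by simp
  qed
  obtain j :: 'a where True by simp
  from key[of j] have "real m / N = real m / N'" unfolding add_divide_distrib by linarith
  hence "N = N'" using m by auto
  hence ll: "l = l'" using n unfolding N_def N'_def by (simp add: power_inject_exp)
  have "i $ j = i' $ j" for j using key[of j] \<open>N = N'\<close> Np by (simp add: field_simps)
  hence "i = i'" by (simp add: vec_eq_iff)
  with ll show ?thesis by simp
qed

lemma compose_child:
  fixes a0 a b :: int and n m e :: nat
  assumes n: "n \<ge> 1"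
    and h1: "a0 * int n ^ e \<le> a" and h2: "a + int m \<le> (a0 + int m) * int n ^ e"
    and c1: "int n * a \<le> b" and c2: "b \<le> int n * a + int ((n - 1) * m)"
  shows "a0 * int n ^ Suc e \<le> b \<and> b + int m \<le> (a0 + int m) * int n ^ Suc e"
proof
  have "a0 * int n ^ Suc e = int n * (a0 * int n ^ e)" by (simp add: algebra_simps)
  also have "\<dots> \<le> int n * a" using h1 by (simp add: mult_left_mono)
  finally show "a0 * int n ^ Suc e \<le> b" using c1 by simp
next
  have e1: "int ((n - 1) * m) = (int n - 1) * int m" using n by (simp add: of_nat_diff)
  have "b + int m \<le> int n * (a + int m)" using c2 unfolding e1 by (simp add: algebra_simps)
  also have "\<dots> \<le> int n * ((a0 + int m) * int n ^ e)" using h2 by (simp add: mult_left_mono)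
  also have "\<dots> = (a0 + int m) * int n ^ Suc e" by (simp add: algebra_simps)
  finally show "b + int m \<le> (a0 + int m) * int n ^ Suc e" .
qed

lemma far_zero:
  fixes a0 b k :: int and n m e :: nat and t :: real
  assumes n: "n \<ge> 2"
    and h1: "a0 * int n ^ e \<le> b" and h2: "b + int m \<le> (a0 + int m) * int n ^ e"
    and kk: "k + 1 \<le> a0 \<or> a0 + int m \<le> k" and t: "0 < t" "t < 1"
  shows "\<not> (0 < real n ^ e * (t + of_int k) - of_int b \<and> real n ^ e * (t + of_int k) - of_int b < real m)"
proof -
  have Ep: "real n ^ e > 0" using n by simp
  have "real_of_int (a0 * int n ^ e) \<le> of_int b" using h1 by (simp only: of_int_le_iff)
  hence r1: "of_int a0 * real n ^ e \<le> of_int b" by simp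
  have "real_of_int (b + int m) \<le> of_int ((a0 + int m) * int n ^ e)" using h2 by (simp only: of_int_le_iff)
  hence r2: "of_int b + real m \<le> (of_int a0 + real m) * real n ^ e" by simp
  from kk show ?thesis
  proof
    assume "k + 1 \<le> a0"
    hence "t + of_int k < of_int a0" using t by linarith
    hence "real n ^ e * (t + of_int k) < real n ^ e * of_int a0" using Ep by simp
    thus ?thesis using r1 by (simp add: algebra_simps)
  next
    assume "a0 + int m \<le> k"
    hence "t + of_int k > of_int a0 + real m" using t by linarith
    hence "real n ^ e * (t + of_int k) > real n ^ e * (of_int a0 + real m)" using Ep by simp
    thus ?thesis using r2 by (simp add: algebra_simps)
  qed
qed

lemma ancestor:
  assumes n: "n \<ge> 2" and m: "m \<ge> 2" and lin: "lineage n m L"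
  shows "bspl n m q a \<in> L \<Longrightarrow> l \<le> q \<Longrightarrow> \<exists>a0. bspl n m l a0 \<in> L \<and>
     (\<forall>j. a0 $ j * int n ^ (q - l) \<le> a $ j \<and> a $ j + int m \<le> (a0 $ j + int m) * int n ^ (q - l))"
proof (induction q arbitrary: a)
  case 0
  thus ?case by (intro exI[of _ a]) simp
next
  case (Suc q)
  show ?case
  proof (cases "l = Suc q")
    case True thus ?thesis using Suc.prems by (intro exI[of _ a]) simp
  next
    case False
    hence lq: "l \<le> q" using Suc.prems by simp
    have "bspl n m (Suc q) a \<in> B0 n m \<union> chS n m L" using lin Suc.prems unfolding lineage_def by blast
    moreover have "bspl n m (Suc q) a \<notin> B0 n m"
    proof
      assume "bspl n m (Suc q) a \<in> B0 n m"
      then obtain i where "bspl n m (Suc q) a = bspl n m 0 i" unfolding B0_def by blast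
      thus False using bspl_inj[OF n m] by blast
    qed
    ultimately obtain psi where psi: "psi \<in> L" "bspl n m (Suc q) a \<in> ch n m psi" unfolding chS_def by blast
    then obtain l1 i1 k where eq: "bspl n m (Suc q) a = bspl n m (Suc l1) k" and p: "psi = bspl n m l1 i1"
      and c1: "vle (\<chi> j. int n * i1 $ j) k" and c2: "vle k (\<chi> j. int n * i1 $ j + int ((n - 1) * m))"
      unfolding ch_def by blast
    from bspl_inj[OF n m eq] have "l1 = q" "k = a" by auto
    with psi p have "bspl n m q i1 \<in> L" by simp
    from Suc.IH[OF this lq] obtain a0 where a0: "bspl n m l a0 \<in> L"
      "\<forall>j. a0 $ j * int n ^ (q - l) \<le> i1 $ j \<and> i1 $ j + int m \<le> (a0 $ j + int m) * int n ^ (q - l)" by blast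
    have sq: "Suc q - l = Suc (q - l)" using lq by simp
    show ?thesis
    proof (intro exI[of _ a0] conjI allI)
      show "bspl n m l a0 \<in> L" by (rule a0(1))
      fix j
      have "int n * i1 $ j \<le> a $ j" "a $ j \<le> int n * i1 $ j + int ((n - 1) * m)"
        using c1 c2 \<open>k = a\<close> by (auto simp: vle_def)
      note cc = compose_child[of n "a0 $ j" "q - l" "i1 $ j" m "a $ j"]
      have "n \<ge> 1" using n by simp
      from cc[OF this] a0(2) \<open>int n * i1 $ j \<le> a $ j\<close> \<open>a $ j \<le> int n * i1 $ j + int ((n - 1) * m)\<close>
      have "a0 $ j * int n ^ Suc (q - l) \<le> a $ j \<and> a $ j + int m \<le> (a0 $ j + int m) * int n ^ Suc (q - l)"
        by blast
      thus "a0 $ j * int n ^ (Suc q - l) \<le> a $ j" "a $ j + int m \<le> (a0 $ j + int m) * int n ^ (Suc q - l)"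
        unfolding sq by auto
    qed
  qed
qed

theorem lemma6p7:
  fixes n m :: nat and L :: "(real ^ 'd \<Rightarrow> real) set"
  assumes "n \<ge> 2" and "m \<ge> 2"
    and "lineage n m L"
    and "absorbing n m L"
  shows "lin_indep_fun (hgen n m L)"
proof -
  note n = assms(1) and m = assms(2) and lin = assms(3) and ab = assms(4)
  have Hb: "g \<in> hgen n m L \<Longrightarrow> \<exists>l i. g = bspl n m l i" for g
    unfolding hgen_def B0_def chS_def ch_def by blast
  show ?thesis unfolding lin_indep_fun_def
  proof (intro allI impI)
    fix S :: "(real^'d \<Rightarrow> real) set" and c :: "(real^'d \<Rightarrow> real) \<Rightarrow> real"
    assume A: "finite S \<and> S \<subseteq> hgen n m L \<and> (\<forall>x. (\<Sum>f\<in>S. c f * f x) = 0)"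
    hence S: "finite S" "S \<subseteq> hgen n m L" and Z: "\<And>x. (\<Sum>f\<in>S. c f * f x) = 0" by auto
    have main: "\<forall>f\<in>S. \<forall>i. f = bspl n m l i \<longrightarrow> c f = 0" for l
    proof (induction l rule: less_induct)
      case (less l)
      show ?case
      proof (intro ballI allI impI)
        fix f i assume fS: "f \<in> S" and fi: "f = bspl n m l i"
        have fH: "f \<in> hgen n m L" using fS S by blast
        from ab fH obtain C where C: "C \<in> cellsupp n m f" "C \<notin> cellsuppS n m L"
          unfolding absorbing_def by blast
        then obtain l' i' k where Ck: "C = cell n l' k" "f = bspl n m l' i'" "vle i' k"
            "vle k (\<chi> j. i' $ j + int (m - 1))"
          unfolding cellsupp_def by blast
        from bspl_inj[OF n m, of l i l' i'] fi Ck(2) have ll: "l' = l" "i' = i" by auto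
        have im1: "int (m - 1) = int m - 1" using m by simp
        have k1: "\<forall>j. i $ j \<le> k $ j \<and> k $ j \<le> i $ j + int m - 1"
        proof
          fix j
          from Ck(3,4) have "i' $ j \<le> k $ j" "k $ j \<le> i' $ j + int (m - 1)" by (auto simp: vle_def)
          thus "i $ j \<le> k $ j \<and> k $ j \<le> i $ j + int m - 1" using ll im1 by simp
        qed
        have notL: "\<exists>j. k $ j + 1 \<le> a0 $ j \<or> a0 $ j + int m \<le> k $ j" if a0: "bspl n m l a0 \<in> L" for a0
        proof (rule ccontr)
          assume "\<not> (\<exists>j. k $ j + 1 \<le> a0 $ j \<or> a0 $ j + int m \<le> k $ j)"
          hence h: "\<not> (k $ j + 1 \<le> a0 $ j) \<and> \<not> (a0 $ j + int m \<le> k $ j)" for j by blast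
          have "vle a0 k" unfolding vle_def
          proof fix j show "a0 $ j \<le> k $ j" using h[of j] by linarith qed
          moreover have "vle k (\<chi> j. a0 $ j + int (m - 1))" unfolding vle_def
          proof fix j show "k $ j \<le> (\<chi> j. a0 $ j + int (m - 1)) $ j" using h[of j] im1 by simp qed
          ultimately have "vle a0 k \<and> vle k (\<chi> j. a0 $ j + int (m - 1))" by simp
          hence "C \<in> cellsupp n m (bspl n m l a0)" using Ck(1) ll unfolding cellsupp_def by blast
          hence "C \<in> cellsuppS n m L" using a0 unfolding cellsuppS_def by blast
          thus False using C(2) by blast
        qed
        define xt where "xt t = (\<chi> j. (t $ j + of_int (k $ j)) / real n ^ l)" for t :: "real^'d"
        define Sl where "Sl = {g\<in>S. \<exists>b::int^'d. g = bspl n m l b}"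
        define idx where "idx g = (SOME b::int^'d. g = bspl n m l b)" for g :: "real^'d \<Rightarrow> real"
        have idx: "g = bspl n m l (idx g)" if "g \<in> Sl" for g
          using that unfolding Sl_def idx_def by (auto intro: someI_ex)
        define \<sigma> where "\<sigma> g = ((\<chi> j. k $ j - idx g $ j)::int^'d)" for g :: "real^'d \<Rightarrow> real"
        have Np: "real n ^ l > 0" using n by simp
        have xtj: "real n ^ l * xt t $ j = t $ j + of_int (k $ j)" for t j
          using Np by (simp add: xt_def)
        have vanish: "c g * g (xt t) = 0" if g: "g \<in> S - Sl" and t: "\<forall>j. 0 < t $ j \<and> t $ j < 1" for g t
        proof -
          from g S Hb obtain p b where gb: "g = bspl n m p b" by blast
          have "p \<noteq> l" using g gb unfolding Sl_def by blast
          then consider "p < l" | "p > l" by linarith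
          thus ?thesis
          proof cases
            case 1 thus ?thesis using less.IH[OF 1] g gb by auto
          next
            case 2
            have gH: "g \<in> B0 n m \<union> chS n m L" using g S unfolding hgen_def by blast
            have "g \<notin> B0 n m"
            proof
              assume "g \<in> B0 n m" then obtain i0 where "g = bspl n m 0 i0" unfolding B0_def by blast
              thus False using bspl_inj[OF n m, of p b 0 i0] gb 2 by simp
            qed
            with gH obtain psi where psi: "psi \<in> L" "g \<in> ch n m psi" unfolding chS_def by blast
            then obtain q a b' where eq: "g = bspl n m (Suc q) b'" and p: "psi = bspl n m q a"
              and c1: "vle (\<chi> j. int n * a $ j) b'" and c2: "vle b' (\<chi> j. int n * a $ j + int ((n - 1) * m))"
              unfolding ch_def by blast
            from bspl_inj[OF n m, of p b "Suc q" b'] gb eq have pq: "p = Suc q" "b' = b" by auto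
            have lq: "l \<le> q" using 2 pq by simp
            from ancestor[OF n m lin, of q a l] psi p lq obtain a0 where a0: "bspl n m l a0 \<in> L"
              "\<forall>j. a0 $ j * int n ^ (q - l) \<le> a $ j \<and> a $ j + int m \<le> (a0 $ j + int m) * int n ^ (q - l)"
              by blast
            from notL[OF a0(1)] obtain j where kk: "k $ j + 1 \<le> a0 $ j \<or> a0 $ j + int m \<le> k $ j" by blast
            have "int n * a $ j \<le> b $ j" "b $ j \<le> int n * a $ j + int ((n - 1) * m)"
              using c1 c2 pq by (auto simp: vle_def)
            moreover have "n \<ge> 1" using n by simp
            ultimately have bb: "a0 $ j * int n ^ Suc (q - l) \<le> b $ j \<and> b $ j + int m \<le> (a0 $ j + int m) * int n ^ Suc (q - l)"
              using compose_child[of n "a0 $ j" "q - l" "a $ j" m "b $ j"] a0(2) by blast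
            have fz: "\<not> (0 < real n ^ Suc (q - l) * (t $ j + of_int (k $ j)) - of_int (b $ j) \<and>
                 real n ^ Suc (q - l) * (t $ j + of_int (k $ j)) - of_int (b $ j) < real m)"
              using far_zero[OF n bb[THEN conjunct1] bb[THEN conjunct2] kk] t by blast
            have pe: "real n ^ p * xt t $ j = real n ^ Suc (q - l) * (t $ j + of_int (k $ j))"
            proof -
              have "real n ^ p = real n ^ Suc (q - l) * real n ^ l" using pq lq
                by (simp add: power_add[symmetric])
              thus ?thesis using xtj[of t j] by (simp add: mult.assoc)
            qed
            have "g (xt t) = 0"
            proof (rule ccontr)
              assume "g (xt t) \<noteq> 0"
              hence "\<forall>j. 0 < real n ^ p * xt t $ j - of_int (b $ j) \<and> real n ^ p * xt t $ j - of_int (b $ j) < real m"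
                using bspl_nz[OF m] gb by blast
              thus False using fz pe by metis
            qed
            thus ?thesis by simp
          qed
        qed
        have eval: "g (xt t) = (\<Prod>j\<in>UNIV. poly (Pp m (\<sigma> g $ j)) (t $ j))"
          if g: "g \<in> Sl" and t: "\<forall>j. 0 < t $ j \<and> t $ j < 1" for g t
        proof -
          have "g (xt t) = (\<Prod>j\<in>UNIV. cardB m (t $ j + of_int (\<sigma> g $ j)))"
            by (subst idx[OF g]) (simp add: bspl_def xtj \<sigma>_def add_diff_eq)
          also have "\<dots> = (\<Prod>j\<in>UNIV. poly (Pp m (\<sigma> g $ j)) (t $ j))"
            using t by (intro prod.cong refl cardB_Pp) (auto simp: less_imp_le)
          finally show ?thesis .
        qed
        have tsum: "\<forall>t::real^'d. (\<forall>j. 0 < t$j \<and> t$j < 1) \<longrightarrow>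
            (\<Sum>g\<in>Sl. c g * (\<Prod>j\<in>UNIV. poly (Pp m (\<sigma> g $ j)) (t$j))) = 0"
        proof (intro allI impI)
          fix t :: "real^'d" assume t: "\<forall>j. 0 < t$j \<and> t$j < 1"
          have "(\<Sum>g\<in>Sl. c g * (\<Prod>j\<in>UNIV. poly (Pp m (\<sigma> g $ j)) (t$j))) = (\<Sum>g\<in>Sl. c g * g (xt t))"
            using t by (intro sum.cong refl) (simp add: eval)
          also have "\<dots> = (\<Sum>g\<in>S. c g * g (xt t))"
            by (rule sum.mono_neutral_left) (use S(1) vanish t in \<open>auto simp: Sl_def\<close>)
          also have "\<dots> = 0" by (rule Z)
          finally show "(\<Sum>g\<in>Sl. c g * (\<Prod>j\<in>UNIV. poly (Pp m (\<sigma> g $ j)) (t$j))) = 0" .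
        qed
        have inj: "\<forall>g\<in>Sl. \<forall>g'\<in>Sl. (\<forall>j\<in>UNIV. \<sigma> g $ j = \<sigma> g' $ j) \<longrightarrow> g = g'"
        proof (intro ballI impI)
          fix g g' assume g: "g \<in> Sl" "g' \<in> Sl" and e: "\<forall>j\<in>UNIV. \<sigma> g $ j = \<sigma> g' $ j"
          hence "idx g = idx g'" by (simp add: \<sigma>_def vec_eq_iff)
          thus "g = g'" using idx[OF g(1)] idx[OF g(2)] by simp
        qed
        have fSl: "f \<in> Sl" using fS fi by (auto simp: Sl_def)
        have "idx f = i" using bspl_inj[OF n m, of l i l "idx f"] idx[OF fSl] fi by auto
        hence valid: "\<forall>j\<in>UNIV. 0 \<le> \<sigma> f $ j \<and> \<sigma> f $ j < int m" 
        proof (intro ballI)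
          fix j :: 'd assume "j \<in> UNIV"
          have "i $ j \<le> k $ j \<and> k $ j \<le> i $ j + int m - 1" using k1 by blast
          thus "0 \<le> \<sigma> f $ j \<and> \<sigma> f $ j < int m" using \<open>idx f = i\<close> by (simp add: \<sigma>_def)
        qed
        have "finite Sl" using S(1) by (simp add: Sl_def)
        show "c f = 0"
          by (rule tensor_indep[of UNIV Sl \<sigma> c m f]) (use \<open>finite Sl\<close> inj tsum fSl valid in auto)
      qed
    qed
    show "\<forall>f\<in>S. c f = 0"
    proof
      fix f assume "f \<in> S"
      with S Hb obtain l i where "f = bspl n m l i" by blast
      thus "c f = 0" using main \<open>f \<in> S\<close> by blast
    qed
  qed
qed

end
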